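(* For real $a,c,d$ and integer $k$, let \[ \begin{aligned} \lambda(k,a,c,d)={}&k^3\left(6a^4-6a^3+a^2+2ac+2d\right)\\ &+k^2\left(-384a^5+324a^4-42a^3-144a^2c-6ac-192ad-12d\right)\\ &+k\left(4608a^6-3072a^5+618a^4+2304a^3c-36a^3+144a^2c+4608a^2d-a^2+4ac+576ad+22d\right)\\ &+4608a^6-2688a^5-6144a^4c+300a^4-24576a^3d-4608a^2d-384ad-12d. \end{aligned} \] Let $a>\frac{22}{10}$, and let $c,d$ satisfy \[ \tfrac{1}{512}\left(-1536a^3+1728a^2-424a+25\right)\le c\le \tfrac{1}{128}\left(192a^2-104a+11\right), \] \[ \tfrac{1}{4096}\left(-384a^2+224a+512c-25\right)\le d\le \tfrac{1}{2048}\left(768a^3-512a^2-512ac+104a+192c-7\right). \] Then there exists an integer $k\ge 4$ such that $\lambda(k,a,c,d)<0$. *)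

theory Defs
  imports Complex_Main
begin

definition lam :: "int \<Rightarrow> real \<Rightarrow> real \<Rightarrow> real \<Rightarrow> real" where
  "lam k a c d =
     (real_of_int k)^3 * (6*a^4 - 6*a^3 + a^2 + 2*a*c + 2*d)
   + (real_of_int k)^2 * (-384*a^5 + 324*a^4 - 42*a^3 - 144*a^2*c - 6*a*c - 192*a*d - 12*d)
   + (real_of_int k) * (4608*a^6 - 3072*a^5 + 618*a^4 + 2304*a^3*c - 36*a^3 + 144*a^2*c
                        + 4608*a^2*d - a^2 + 4*a*c + 576*a*d + 22*d)
   + 4608*a^6 - 2688*a^5 - 6144*a^4*c + 300*a^4 - 24576*a^3*d - 4608*a^2*d - 384*a*d - 12*d"

end

theory Submission
  imports Defs
begin

lemma aux:
  fixes s t :: real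
  assumes "0 \<le> s" "0 \<le> t" "t \<le> 1"
  shows "0 \<le> s^i*t^j \<and> s^i*t^j \<le> s^i"
proof -
  have "t^j \<le> 1" using assms by (simp add: power_le_one)
  moreover have "0 \<le> t^j" using assms by simp
  moreover have "0 \<le> s^i" using assms by simp
  ultimately show ?thesis by (simp add: mult_left_le)
qed

lemma signs:
  fixes s t :: real
  assumes st: "0 \<le> s" "0 \<le> t" "t \<le> 1"
  shows "(-9159040377927/10000000) + (35126555607/4000000)*t + (630486153/800000)*t^2 + (-6886771163469/2000000)*s + (-11322555723/800000)*s*t + (16312851/6400)*s*t^2 + (-265034748609/50000)*s^2 + (-124361229/2000)*s^2*t + (602727/200)*s^2*t^2 + (-1096812561/250)*s^3 + (-3358869/50)*s^3*t + (16881/10)*s^3*t^2 + (-53107128/25)*s^4 + (-167184/5)*s^4*t + (456)*s^4*t^2 + (-15111264/25)*s^5 + (-40368/5)*s^5*t + (48)*s^5*t^2 + (-469248/5)*s^6 + (-768)*s^6*t + (-6144)*s^7 < 0" "(-451816227/1250) + (5154897/500)*t + (10881/50)*t^2 + (-93/20)*t^3 + (-80790264/125)*s + (326804/25)*s*t + (1026/5)*s*t^2 + (-2)*s*t^3 + (-10822336/25)*s^2 + (27504/5)*s^2*t + (48)*s^2*t^2 + (-643584/5)*s^3 + (768)*s^3*t + (-14336)*s^4 \<le> 0" "(-9887772/125) + (195866/25)*t + (-12)*t^2 + (-2)*t^3 + (-2796736/25)*s + (34752/5)*s*t + (-262656/5)*s^2 + (1536)*s^2*t + (-8192)*s^3 \<le>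 0"
proof -
  have F0: "0 \<le> t" "t \<le> 1" using aux[of s t 0 1] st by simp_all
  have F1: "0 \<le> t^2" "t^2 \<le> 1" using aux[of s t 0 2] st by simp_all
  have F2: "0 \<le> t^3" "t^3 \<le> 1" using aux[of s t 0 3] st by simp_all
  have F3: "0 \<le> s*t" "s*t \<le> s" using aux[of s t 1 1] st by simp_all
  have F4: "0 \<le> s*t^2" "s*t^2 \<le> s" using aux[of s t 1 2] st by simp_all
  have F5: "0 \<le> s*t^3" "s*t^3 \<le> s" using aux[of s t 1 3] st by simp_all
  have F6: "0 \<le> s^2*t" "s^2*t \<le> s^2" using aux[of s t 2 1] st by simp_all
  have F7: "0 \<le> s^2*t^2" "s^2*t^2 \<le> s^2" using aux[of s t 2 2] st by simp_all
  have F8: "0 \<le> s^3*t" "s^3*t \<le> s^3" using aux[of s t 3 1] st by simp_all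
  have F9: "0 \<le> s^3*t^2" "s^3*t^2 \<le> s^3" using aux[of s t 3 2] st by simp_all
  have F10: "0 \<le> s^4*t" "s^4*t \<le> s^4" using aux[of s t 4 1] st by simp_all
  have F11: "0 \<le> s^4*t^2" "s^4*t^2 \<le> s^4" using aux[of s t 4 2] st by simp_all
  have F12: "0 \<le> s^5*t" "s^5*t \<le> s^5" using aux[of s t 5 1] st by simp_all
  have F13: "0 \<le> s^5*t^2" "s^5*t^2 \<le> s^5" using aux[of s t 5 2] st by simp_all
  have F14: "0 \<le> s^6*t" "s^6*t \<le> s^6" using aux[of s t 6 1] st by simp_all
  have F15: "0 \<le> s" using st by simp
  have F16: "0 \<le> s^2" using st by simp
  have F17: "0 \<le> s^3" using st by simp
  have F18: "0 \<le> s^4" using st by simp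
  have F19: "0 \<le> s^5" using st by simp
  have F20: "0 \<le> s^6" using st by simp
  have F21: "0 \<le> s^7" using st by simp
  show "(-9159040377927/10000000) + (35126555607/4000000)*t + (630486153/800000)*t^2 + (-6886771163469/2000000)*s + (-11322555723/800000)*s*t + (16312851/6400)*s*t^2 + (-265034748609/50000)*s^2 + (-124361229/2000)*s^2*t + (602727/200)*s^2*t^2 + (-1096812561/250)*s^3 + (-3358869/50)*s^3*t + (16881/10)*s^3*t^2 + (-53107128/25)*s^4 + (-167184/5)*s^4*t + (456)*s^4*t^2 + (-15111264/25)*s^5 + (-40368/5)*s^5*t + (48)*s^5*t^2 + (-469248/5)*s^6 + (-768)*s^6*t + (-6144)*s^7 < 0" using F0 F1 F2 F3 F4 F5 F6 F7 F8 F9 F10 F11 F12 F13 F14 F15 F16 F17 F18 F19 F20 F21 by linarith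
  show "(-451816227/1250) + (5154897/500)*t + (10881/50)*t^2 + (-93/20)*t^3 + (-80790264/125)*s + (326804/25)*s*t + (1026/5)*s*t^2 + (-2)*s*t^3 + (-10822336/25)*s^2 + (27504/5)*s^2*t + (48)*s^2*t^2 + (-643584/5)*s^3 + (768)*s^3*t + (-14336)*s^4 \<le> 0" using F0 F1 F2 F3 F4 F5 F6 F7 F8 F9 F10 F11 F12 F13 F14 F15 F16 F17 F18 F19 F20 F21 by linarith
  show "(-9887772/125) + (195866/25)*t + (-12)*t^2 + (-2)*t^3 + (-2796736/25)*s + (34752/5)*s*t + (-262656/5)*s^2 + (1536)*s^2*t + (-8192)*s^3 \<le> 0" using F0 F1 F2 F3 F4 F5 F6 F7 F8 F9 F10 F11 F12 F13 F14 F15 F16 F17 F18 F19 F20 F21 by linarith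
qed

lemma ident:
  fixes a s t c d :: real and k :: int
  assumes "a = 11/5 + s" "real_of_int k = 32*a - t"
  shows "lam k a c d = ((-9159040377927/10000000) + (35126555607/4000000)*t + (630486153/800000)*t^2 + (-6886771163469/2000000)*s + (-11322555723/800000)*s*t + (16312851/6400)*s*t^2 + (-265034748609/50000)*s^2 + (-124361229/2000)*s^2*t + (602727/200)*s^2*t^2 + (-1096812561/250)*s^3 + (-3358869/50)*s^3*t + (16881/10)*s^3*t^2 + (-53107128/25)*s^4 + (-167184/5)*s^4*t + (456)*s^4*t^2 + (-15111264/25)*s^5 + (-40368/5)*s^5*t + (48)*s^5*t^2 + (-469248/5)*s^6 + (-768)*s^6*t + (-6144)*s^7) + ((-451816227/1250) + (5154897/500)*t + (10881/50)*t^2 + (-93/20)*t^3 + (-80790264/125)*s + (326804/25)*s*t + (1026/5)*s*t^2 + (-2)*s*t^3 + (-10822336/25)*s^2 + (27504/5)*s^2*t + (48)*s^2*t^2 + (-643584/5)*s^3 + (768)*s^3*t + (-14336)*s^4) * (c - ((-1536*a^3 + 1728*a^2 - 424*a + 25) / 512)) + ((-9887772/125) + (195866/25)*t + (-12)*t^2 + (-2)*t^3 + (-2796736/25)*s + (34752/5)*s*t + (-262656/5)*s^2 + (1536)*s^2*t + (-8192)*s^3) * (d - ((-384*a^2 + 224*a + 512*c - 25) / 4096))"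
  unfolding lam_def assms(2) unfolding assms(1) by algebra

theorem mainTheorem12:
  fixes a c d :: real
  assumes "a > 22/10"
    and "(-1536*a^3 + 1728*a^2 - 424*a + 25) / 512 \<le> c"
    and "c \<le> (192*a^2 - 104*a + 11) / 128"
    and "(-384*a^2 + 224*a + 512*c - 25) / 4096 \<le> d"
    and "d \<le> (768*a^3 - 512*a^2 - 512*a*c + 104*a + 192*c - 7) / 2048"
  shows "\<exists>k::int. k \<ge> 4 \<and> lam k a c d < 0"
proof -
  define k where "k = \<lfloor>32*a\<rfloor>"
  define t where "t = 32*a - real_of_int k"
  define s where "s = a - 11/5"
  have t0: "0 \<le> t" and t1: "t \<le> 1" unfolding t_def k_def by linarith+
  have s0: "0 \<le> s" using assms(1) unfolding s_def by simp
  have k4: "k \<ge> 4" unfolding k_def using assms(1) by linarith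
  have I: "lam k a c d = ((-9159040377927/10000000) + (35126555607/4000000)*t + (630486153/800000)*t^2 + (-6886771163469/2000000)*s + (-11322555723/800000)*s*t + (16312851/6400)*s*t^2 + (-265034748609/50000)*s^2 + (-124361229/2000)*s^2*t + (602727/200)*s^2*t^2 + (-1096812561/250)*s^3 + (-3358869/50)*s^3*t + (16881/10)*s^3*t^2 + (-53107128/25)*s^4 + (-167184/5)*s^4*t + (456)*s^4*t^2 + (-15111264/25)*s^5 + (-40368/5)*s^5*t + (48)*s^5*t^2 + (-469248/5)*s^6 + (-768)*s^6*t + (-6144)*s^7) + ((-451816227/1250) + (5154897/500)*t + (10881/50)*t^2 + (-93/20)*t^3 + (-80790264/125)*s + (326804/25)*s*t + (1026/5)*s*t^2 + (-2)*s*t^3 + (-10822336/25)*s^2 + (27504/5)*s^2*t + (48)*s^2*t^2 + (-643584/5)*s^3 + (768)*s^3*t + (-14336)*s^4) * (c - ((-1536*a^3 + 1728*a^2 - 424*a + 25) / 512)) + ((-9887772/125) + (195866/25)*t + (-12)*t^2 + (-2)*t^3 + (-2796736/25)*s + (34752/5)*s*t + (-262656/5)*s^2 + (1536)*s^2*t + (-8192)*s^3) * (d - ((-384*a^2 + 224*a + 512*c - 25) / 4096))"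
    by (rule ident) (simp_all add: s_def t_def)
  note sg = signs[OF s0 t0 t1]
  have "((-451816227/1250) + (5154897/500)*t + (10881/50)*t^2 + (-93/20)*t^3 + (-80790264/125)*s + (326804/25)*s*t + (1026/5)*s*t^2 + (-2)*s*t^3 + (-10822336/25)*s^2 + (27504/5)*s^2*t + (48)*s^2*t^2 + (-643584/5)*s^3 + (768)*s^3*t + (-14336)*s^4) * (c - ((-1536*a^3 + 1728*a^2 - 424*a + 25) / 512)) \<le> 0"
    by (rule mult_nonpos_nonneg) (use sg(2) assms(2) in auto)
  moreover have "((-9887772/125) + (195866/25)*t + (-12)*t^2 + (-2)*t^3 + (-2796736/25)*s + (34752/5)*s*t + (-262656/5)*s^2 + (1536)*s^2*t + (-8192)*s^3) * (d - ((-384*a^2 + 224*a + 512*c - 25) / 4096)) \<le> 0"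
    by (rule mult_nonpos_nonneg) (use sg(3) assms(4) in auto)
  ultimately have "lam k a c d < 0" using I sg(1) by linarith
  then show ?thesis using k4 by blast
qed

end
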